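(* The principal eigenvalue function $p\mapsto\mu_1(p)$, $[2,+\infty)\to\mathbb{R}$, is continuous.
   Context: For $p\ge2$, let $W_c^{1,p}(0,1)=\{v\in W^{1,p}(0,1):v'(0)=v(1)=0\}$, $\eta_1(p)=\inf\left\{\frac{\int_0^1|v'|^p dr}{(p-1)\int_0^1 r^{p-2}|v|^p dr}: v\in W_c^{1,p}(0,1),v\not\equiv0\right\}$ and $\mu_1(p)=\eta_1(p)^{1/(p-1)}$; $\mu_1(p)$ is the principal eigenvalue of $-\left(|v'|^{p-2}v'\right)'=\mu^{p-1}(p-1)r^{p-2}|v|^{p-2}v$ in $(0,1)$, $v'(0)=v(1)=0$. *)

theory Defs
  imports "HOL-Analysis.Analysis"
begin

text \<open>One-dimensional Sobolev space W^{1,p}(0,1): v is (the absolutely continuous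
representative) v(x) = v(0) + int_0^x g with weak derivative g in L^p(0,1).\<close>
definition W1p_with_deriv :: "real \<Rightarrow> (real \<Rightarrow> real) \<Rightarrow> (real \<Rightarrow> real) \<Rightarrow> bool" where
  "W1p_with_deriv p v g \<longleftrightarrow>
     set_integrable lborel {0..1} g \<and>
     set_integrable lborel {0..1} (\<lambda>x. \<bar>g x\<bar> powr p) \<and>
     (\<forall>x\<in>{0..1}. v x = v 0 + (LINT t:{0..x}|lborel. g t))"

definition Wc1p_with_deriv :: "real \<Rightarrow> (real \<Rightarrow> real) \<Rightarrow> (real \<Rightarrow> real) \<Rightarrow> bool" where
  "Wc1p_with_deriv p v g \<longleftrightarrow>
     W1p_with_deriv p v g \<and> (v has_real_derivative 0) (at 0 within {0..1}) \<and> v 1 = 0"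

definition eta1 :: "real \<Rightarrow> real" where
  "eta1 p = Inf { (LINT r:{0..1}|lborel. \<bar>g r\<bar> powr p) /
                  ((p - 1) * (LINT r:{0..1}|lborel. r powr (p - 2) * \<bar>v r\<bar> powr p))
                | v g. Wc1p_with_deriv p v g \<and> (\<exists>x\<in>{0..1}. v x \<noteq> 0) }"

definition mu1 :: "real \<Rightarrow> real" where
  "mu1 p = eta1 p powr (1 / (p - 1))"

end

theory Submission
  imports Defs
begin


lemma wc_int: "Wc1p_with_deriv p v g \<Longrightarrow> set_integrable lborel {0..1} g"
  by (simp add: Wc1p_with_deriv_def W1p_with_deriv_def)

lemma wc_v:
  assumes "Wc1p_with_deriv p v g" "x \<in> {0..1}"
  shows "v x = (LINT t:{0..x}|lborel. g t) - (LINT t:{0..1}|lborel. g t)"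
proof -
  have A: "\<forall>x\<in>{0..1}. v x = v 0 + (LINT t:{0..x}|lborel. g t)" "v 1 = 0"
    using assms unfolding Wc1p_with_deriv_def W1p_with_deriv_def by blast+
  have "v 1 = v 0 + (LINT t:{0..1}|lborel. g t)" "v x = v 0 + (LINT t:{0..x}|lborel. g t)"
    using A(1) assms(2) by (meson atLeastAtMost_iff order_refl zero_le_one)+
  then show ?thesis using A(2) by linarith
qed

lemma int_split:
  fixes g :: "real \<Rightarrow> real"
  assumes g: "set_integrable lborel {0..1} g" and x: "x \<in> {0..1}"
  shows "(LINT t:{0..1}|lborel. g t) = (LINT t:{0..x}|lborel. g t) + (LINT t:{x<..1}|lborel. g t)"
proof -
  have e: "{0..1} = {0..x} \<union> {x<..(1::real)}" using x by auto
  have "set_integrable lborel {0..x} g" "set_integrable lborel {x<..1} g"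
    using x by (auto intro: set_integrable_subset[OF g])
  then show ?thesis
    by (subst e, subst set_integral_Un) auto
qed

lemma int_sub_bound:
  fixes g :: "real \<Rightarrow> real"
  assumes g: "set_integrable lborel {0..1} g" and x: "x \<in> {0..1}"
  shows "\<bar>(LINT t:{0..x}|lborel. g t) - (LINT t:{0..1}|lborel. g t)\<bar> \<le> (LINT t:{0..1}|lborel. \<bar>g t\<bar>)"
proof -
  have ga: "set_integrable lborel {0..1} (\<lambda>t. \<bar>g t\<bar>)" using g by (rule set_integrable_abs)
  have "set_integrable lborel {x<..1} g"
    using x by (auto intro: set_integrable_subset[OF g])
  then have 1: "\<bar>LINT t:{x<..1}|lborel. g t\<bar> \<le> (LINT t:{x<..1}|lborel. \<bar>g t\<bar>)"
    using set_integral_norm_bound[of lborel "{x<..1}" g] by simp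
  have 2: "0 \<le> (LINT t:{0..x}|lborel. \<bar>g t\<bar>)"
    unfolding set_lebesgue_integral_def by (rule Bochner_Integration.integral_nonneg) (auto simp: indicator_def)
  show ?thesis using int_split[OF g x] int_split[OF ga x] 1 2 by linarith
qed

lemma wc_cont:
  assumes "Wc1p_with_deriv p v g"
  shows "continuous_on {0..1} v"
proof -
  have g: "set_integrable lborel {0..1} g" using assms by (rule wc_int)
  have gi: "g integrable_on {0..1}" using set_borel_integral_eq_integral(1)[OF g] .
  have "continuous_on {0..1} (\<lambda>x. integral {0..x} g - (LINT t:{0..1}|lborel. g t))"
    by (intro continuous_intros indefinite_integral_continuous_1 gi)
  moreover have "\<And>x. x \<in> {0..1} \<Longrightarrow> integral {0..x} g - (LINT t:{0..1}|lborel. g t) = v x"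
  proof -
    fix x :: real assume x: "x \<in> {0..1}"
    have "set_integrable lborel {0..x} g" using x by (auto intro: set_integrable_subset[OF g])
    then show "integral {0..x} g - (LINT t:{0..1}|lborel. g t) = v x"
      using wc_v[OF assms x] set_borel_integral_eq_integral(2) by metis
  qed
  ultimately show ?thesis by (rule continuous_on_eq)
qed



lemma sint_const: "set_integrable lborel {0..1::real} (\<lambda>_. c::real)"
  unfolding set_integrable_def
  by (intro integrable_scaleR_left integrable_real_indicator) auto

lemma sint_const_val: "(LINT x:{0..1::real}|lborel. c) = (c::real)"
  by (subst set_integral_const) auto

lemma young1:
  fixes a \<alpha> :: real
  assumes "0 \<le> a" "0 < \<alpha>" "\<alpha> \<le> 1"
  shows "a powr \<alpha> \<le> \<alpha> * a + (1 - \<alpha>)"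
proof (cases "a = 0")
  case True then show ?thesis using assms by simp
next
  case False
  then show ?thesis using Youngs_inequality_0[of \<alpha> "1-\<alpha>" a 1] assms by simp
qed

lemma young_abs:
  fixes x p :: real
  assumes "1 \<le> p"
  shows "\<bar>x\<bar> \<le> (1/p) * \<bar>x\<bar> powr p + (1 - 1/p)"
proof -
  have "(\<bar>x\<bar> powr p) powr (1/p) \<le> (1/p) * \<bar>x\<bar> powr p + (1 - 1/p)"
    using assms by (intro young1) auto
  moreover have "(\<bar>x\<bar> powr p) powr (1/p) = \<bar>x\<bar>"
    using assms by (simp add: powr_powr)
  ultimately show ?thesis by simp
qed

lemma young_pq:
  fixes x p q :: real
  assumes "0 < p" "p \<le> q"
  shows "\<bar>x\<bar> powr p \<le> (p/q) * \<bar>x\<bar> powr q + (1 - p/q)"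
proof -
  have "(\<bar>x\<bar> powr q) powr (p/q) \<le> (p/q) * \<bar>x\<bar> powr q + (1 - p/q)"
    using assms by (intro young1) auto
  moreover have "(\<bar>x\<bar> powr q) powr (p/q) = \<bar>x\<bar> powr p"
    using assms by (simp add: powr_powr)
  ultimately show ?thesis by simp
qed

lemma setmeas:
  fixes f h :: "real \<Rightarrow> real"
  assumes "f \<in> borel_measurable borel" "\<And>x. x \<in> A \<Longrightarrow> f x = h x" "A \<in> sets borel"
  shows "set_borel_measurable lborel A h"
proof -
  have "(\<lambda>x. indicator A x *\<^sub>R h x) = (\<lambda>x. indicator A x *\<^sub>R f x)"
    using assms(2) by (auto simp: indicator_def)
  moreover have "(\<lambda>x. indicator A x *\<^sub>R f x) \<in> borel_measurable lborel"
    using assms(1,3) by measurable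
  ultimately show ?thesis unfolding set_borel_measurable_def by simp
qed

definition clampv :: "(real \<Rightarrow> real) \<Rightarrow> real \<Rightarrow> real" where
  "clampv v x = v (max 0 (min 1 x))"

lemma clampv_cont:
  assumes "continuous_on {0..1} v"
  shows "continuous_on UNIV (clampv v)"
  unfolding clampv_def
  by (rule continuous_on_compose2[OF assms]) (auto intro!: continuous_intros)

lemma clampv_meas:
  assumes "continuous_on {0..1} v"
  shows "clampv v \<in> borel_measurable borel"
  using clampv_cont[OF assms] by (simp add: borel_measurable_continuous_onI)

lemma clampv_eq: "x \<in> {0..1} \<Longrightarrow> clampv v x = v x"
  by (simp add: clampv_def)

lemma den_integrable:
  fixes v :: "real \<Rightarrow> real"
  assumes c: "continuous_on {0..1} v" and B: "\<And>x. x \<in> {0..1} \<Longrightarrow> \<bar>v x\<bar> \<le> B"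
    and a: "0 \<le> a" and p: "0 < p"
  shows "set_integrable lborel {0..1} (\<lambda>r. r powr a * \<bar>v r\<bar> powr p)"
proof (rule set_integrable_bound[OF sint_const[of "\<bar>B\<bar> powr p"]])
  show "set_borel_measurable lborel {0..1} (\<lambda>r. r powr a * \<bar>v r\<bar> powr p)"
    by (rule setmeas[where f="\<lambda>r. r powr a * \<bar>clampv v r\<bar> powr p"])
       (use clampv_meas[OF c] in \<open>auto simp: clampv_eq\<close>)
  show "AE x in lborel. x \<in> {0..1} \<longrightarrow> norm (x powr a * \<bar>v x\<bar> powr p) \<le> norm (\<bar>B\<bar> powr p)"
  proof (rule AE_I2, rule impI)
    fix x :: real assume x: "x \<in> {0..1}"
    have "x powr a \<le> 1" using x a by (auto intro: powr_le1)
    moreover have "\<bar>v x\<bar> powr p \<le> \<bar>B\<bar> powr p" using B[OF x] p by (auto intro: powr_mono2)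
    ultimately have "x powr a * \<bar>v x\<bar> powr p \<le> 1 * \<bar>B\<bar> powr p"
      by (intro mult_mono) auto
    then show "norm (x powr a * \<bar>v x\<bar> powr p) \<le> norm (\<bar>B\<bar> powr p)" by simp
  qed
qed



definition NN :: "real \<Rightarrow> (real \<Rightarrow> real) \<Rightarrow> real" where
  "NN p g = (LINT r:{0..1}|lborel. \<bar>g r\<bar> powr p)"
definition DD :: "real \<Rightarrow> (real \<Rightarrow> real) \<Rightarrow> real" where
  "DD p v = (LINT r:{0..1}|lborel. r powr (p - 2) * \<bar>v r\<bar> powr p)"
definition Adm :: "real \<Rightarrow> (real \<Rightarrow> real) \<Rightarrow> (real \<Rightarrow> real) \<Rightarrow> bool" where
  "Adm p v g \<longleftrightarrow> Wc1p_with_deriv p v g \<and> (\<exists>x\<in>{0..1}. v x \<noteq> 0)"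

lemma eta1_alt: "eta1 p = Inf {NN p g / ((p - 1) * DD p v) | v g. Adm p v g}"
  unfolding eta1_def NN_def DD_def Adm_def by simp

lemma wc_abs:
  assumes "Wc1p_with_deriv p v g" "x \<in> {0..1}"
  shows "\<bar>v x\<bar> \<le> (LINT t:{0..1}|lborel. \<bar>g t\<bar>)"
  using wc_v[OF assms] int_sub_bound[OF wc_int[OF assms(1)] assms(2)] by simp

lemma wc_gp: "Wc1p_with_deriv p v g \<Longrightarrow> set_integrable lborel {0..1} (\<lambda>x. \<bar>g x\<bar> powr p)"
  by (simp add: Wc1p_with_deriv_def W1p_with_deriv_def)

lemma L1_bound:
  assumes "Wc1p_with_deriv p v g" "1 \<le> p"
  shows "(LINT t:{0..1}|lborel. \<bar>g t\<bar>) \<le> (1/p) * NN p g + (1 - 1/p)"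
proof -
  have "(LINT t:{0..1}|lborel. \<bar>g t\<bar>) \<le> (LINT t:{0..1}|lborel. (1/p) * \<bar>g t\<bar> powr p + (1 - 1/p))"
    using assms wc_gp[OF assms(1)] set_integrable_abs[OF wc_int[OF assms(1)]] sint_const
    by (intro set_integral_mono young_abs) auto
  also have "\<dots> = (1/p) * NN p g + (1 - 1/p)"
    using wc_gp[OF assms(1)] sint_const by (simp add: NN_def sint_const_val)
  finally show ?thesis .
qed

lemma wc_den_int:
  assumes "Wc1p_with_deriv p v g" "0 \<le> a" "0 < q"
  shows "set_integrable lborel {0..1} (\<lambda>r. r powr a * \<bar>v r\<bar> powr q)"
  using den_integrable[OF wc_cont[OF assms(1)] wc_abs[OF assms(1)] assms(2,3)] .



lemma int_ind_const:
  fixes c \<alpha> \<beta> :: real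
  assumes "0 \<le> \<alpha>" "\<alpha> \<le> \<beta>" "\<beta> \<le> 1"
  shows "set_integrable lborel {0..1} (\<lambda>r. c * indicator {\<alpha>..\<beta>} r)"
    and "(LINT r:{0..1}|lborel. c * indicator {\<alpha>..\<beta>} r) = c * (\<beta> - \<alpha>)"
proof -
  have e: "(\<lambda>r. indicator {0..1} r *\<^sub>R (c * indicator {\<alpha>..\<beta>} r)) = (\<lambda>r. c * indicator {\<alpha>..\<beta>} r)"
    using assms by (auto simp: indicator_def)
  show "set_integrable lborel {0..1} (\<lambda>r. c * indicator {\<alpha>..\<beta>} r)"
    unfolding set_integrable_def e using assms by (intro integrable_mult_right integrable_real_indicator) auto
  show "(LINT r:{0..1}|lborel. c * indicator {\<alpha>..\<beta>} r) = c * (\<beta> - \<alpha>)"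
    unfolding set_lebesgue_integral_def e using assms by simp
qed

lemma den_pos:
  assumes W: "Wc1p_with_deriv p v g" and x0: "x0 \<in> {0..1}" "v x0 \<noteq> 0"
    and a: "0 \<le> a" and q: "0 < q"
  shows "0 < (LINT r:{0..1}|lborel. r powr a * \<bar>v r\<bar> powr q)"
proof -
  define m where "m = \<bar>v x0\<bar> / 2"
  have m: "0 < m" using x0 by (simp add: m_def)
  obtain d where d: "0 < d" "\<And>y. y \<in> {0..1} \<Longrightarrow> dist y x0 < d \<Longrightarrow> dist (v y) (v x0) < m"
    using wc_cont[OF W] x0(1) m unfolding continuous_on_iff by metis
  define e where "e = min (d/2) (1/4)"
  have e: "0 < e" "e \<le> d/2" "e \<le> 1/4" using d by (auto simp: e_def)
  obtain \<alpha> \<beta> where ab: "0 < \<alpha>" "\<alpha> < \<beta>" "\<beta> \<le> 1" "\<And>y. y \<in> {\<alpha>..\<beta>} \<Longrightarrow> y \<in> {0..1} \<and> dist y x0 < d"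
  proof (cases "x0 < 1/2")
    case True
    show ?thesis
      by (rule that[of "x0 + e/2" "x0 + e"]) (use True x0 e in \<open>auto simp: dist_real_def\<close>)
  next
    case False
    show ?thesis
      by (rule that[of "x0 - e" "x0 - e/2"]) (use False x0 e in \<open>auto simp: dist_real_def\<close>)
  qed
  define c where "c = \<alpha> powr a * m powr q"
  have c: "0 < c" using ab m by (simp add: c_def)
  have "0 < c * (\<beta> - \<alpha>)" using c ab by simp
  also have "\<dots> = (LINT r:{0..1}|lborel. c * indicator {\<alpha>..\<beta>} r)"
    by (rule int_ind_const(2)[symmetric]) (use ab in auto)
  also have "\<dots> \<le> (LINT r:{0..1}|lborel. r powr a * \<bar>v r\<bar> powr q)"
  proof (rule set_integral_mono)
    show "set_integrable lborel {0..1} (\<lambda>r. c * indicator {\<alpha>..\<beta>} r)"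
      using int_ind_const(1)[of \<alpha> \<beta> c] ab by simp
    show "set_integrable lborel {0..1} (\<lambda>r. r powr a * \<bar>v r\<bar> powr q)"
      by (rule wc_den_int[OF W a q])
    fix r :: real assume r: "r \<in> {0..1}"
    show "c * indicator {\<alpha>..\<beta>} r \<le> r powr a * \<bar>v r\<bar> powr q"
    proof (cases "r \<in> {\<alpha>..\<beta>}")
      case True
      then have "dist (v r) (v x0) < m" using ab(4) d(2) by blast
      then have vr: "m \<le> \<bar>v r\<bar>" unfolding m_def dist_real_def by linarith
      have "\<alpha> powr a \<le> r powr a" using True ab a by (intro powr_mono2) auto
      moreover have "m powr q \<le> \<bar>v r\<bar> powr q" using vr m q by (intro powr_mono2) auto
      ultimately have "c \<le> r powr a * \<bar>v r\<bar> powr q"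
        unfolding c_def by (intro mult_mono) auto
      then show ?thesis using True by simp
    next
      case False then show ?thesis by simp
    qed
  qed
  finally show ?thesis .
qed

lemma NN_pos:
  assumes W: "Wc1p_with_deriv p v g" and x0: "x0 \<in> {0..1}" "v x0 \<noteq> 0" and p: "0 < p"
  shows "0 < NN p g"
proof (rule ccontr)
  assume "\<not> 0 < NN p g"
  moreover have "0 \<le> NN p g" unfolding NN_def set_lebesgue_integral_def
    by (rule Bochner_Integration.integral_nonneg) (auto simp: indicator_def)
  ultimately have "NN p g = 0" by linarith
  then have z: "integral\<^sup>L lborel (\<lambda>r. indicator {0..1} r *\<^sub>R \<bar>g r\<bar> powr p) = 0"
    unfolding NN_def set_lebesgue_integral_def by simp
  have "AE r in lborel. indicator {0..1} r *\<^sub>R \<bar>g r\<bar> powr p = 0"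
    using z wc_gp[OF W] unfolding set_integrable_def
    by (subst (asm) integral_nonneg_eq_0_iff_AE) (auto simp: indicator_def)
  then have "AE r in lborel. indicator {0..1} r *\<^sub>R \<bar>g r\<bar> = 0"
    by eventually_elim (auto simp: indicator_def split: if_splits)
  then have "(LINT t:{0..1}|lborel. \<bar>g t\<bar>) = 0"
    unfolding set_lebesgue_integral_def by (simp add: integral_eq_zero_AE)
  then show False using wc_abs[OF W x0(1)] x0(2) by simp
qed



lemma scale_wc:
  assumes W: "Wc1p_with_deriv p v g"
  shows "Wc1p_with_deriv p (\<lambda>x. c * v x) (\<lambda>x. c * g x)"
proof -
  have g: "set_integrable lborel {0..1} g" and gp: "set_integrable lborel {0..1} (\<lambda>x. \<bar>g x\<bar> powr p)"
    and id: "\<forall>x\<in>{0..1}. v x = v 0 + (LINT t:{0..x}|lborel. g t)"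
    and d: "(v has_real_derivative 0) (at 0 within {0..1})" and v1: "v 1 = 0"
    using W unfolding Wc1p_with_deriv_def W1p_with_deriv_def by blast+
  have "set_integrable lborel {0..1} (\<lambda>x. \<bar>c\<bar> powr p * \<bar>g x\<bar> powr p)"
    using gp by simp
  moreover have "(\<lambda>x. \<bar>c * g x\<bar> powr p) = (\<lambda>x. \<bar>c\<bar> powr p * \<bar>g x\<bar> powr p)"
    by (simp add: abs_mult powr_mult)
  ultimately have gp': "set_integrable lborel {0..1} (\<lambda>x. \<bar>c * g x\<bar> powr p)" by simp
  have id': "\<forall>x\<in>{0..1}. c * v x = c * v 0 + (LINT t:{0..x}|lborel. c * g t)"
  proof
    fix x :: real assume "x \<in> {0..1}"
    then have "v x = v 0 + (LINT t:{0..x}|lborel. g t)" using id by blast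
    then show "c * v x = c * v 0 + (LINT t:{0..x}|lborel. c * g t)" by (simp add: distrib_left)
  qed
  have d': "((\<lambda>x. c * v x) has_real_derivative 0) (at 0 within {0..1})"
    using DERIV_cmult[OF d, of c] by simp
  show ?thesis
    unfolding Wc1p_with_deriv_def W1p_with_deriv_def
    by (intro conjI set_integrable_mult_right[OF g] gp' id' d') (simp add: v1)
qed

lemma NN_scale: "NN p (\<lambda>x. c * g x) = \<bar>c\<bar> powr p * NN p g"
  unfolding NN_def by (simp add: abs_mult powr_mult)

lemma DD_scale: "DD p (\<lambda>x. c * v x) = \<bar>c\<bar> powr p * DD p v"
  unfolding DD_def by (simp add: abs_mult powr_mult algebra_simps)

lemma normalize:
  assumes A: "Adm p v g" and p: "0 < p"
  obtains v' g' where "Adm p v' g'" "NN p g' = 1"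
    "NN p g' / ((p - 1) * DD p v') = NN p g / ((p - 1) * DD p v)"
proof -
  from A obtain x0 where W: "Wc1p_with_deriv p v g" and x0: "x0 \<in> {0..1}" "v x0 \<noteq> 0"
    unfolding Adm_def by blast
  have N: "0 < NN p g" using NN_pos[OF W x0 p] .
  define c where "c = NN p g powr (-1/p)"
  have c: "0 < c" using N by (simp add: c_def)
  have "c powr p = NN p g powr ((-1/p)*p)" unfolding c_def by (rule powr_powr)
  also have "(-1/p)*p = -1" using p by simp
  finally have "c powr p = NN p g powr (-1)" .
  then have cp: "\<bar>c\<bar> powr p = 1 / NN p g"
    using c N by (simp add: powr_minus_divide)
  have cp': "c powr p = 1 / NN p g" using cp c by simp
  have A': "Adm p (\<lambda>x. c * v x) (\<lambda>x. c * g x)"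
    unfolding Adm_def using scale_wc[OF W] x0 c by auto
  moreover have "NN p (\<lambda>x. c * g x) = 1" using N by (simp add: NN_scale cp)
  moreover have "NN p (\<lambda>x. c * g x) / ((p - 1) * DD p (\<lambda>x. c * v x)) = NN p g / ((p - 1) * DD p v)"
    using N c by (simp add: NN_scale DD_scale cp')
  ultimately show ?thesis using that by blast
qed

lemma mk_wc:
  fixes h :: "real \<Rightarrow> real"
  assumes hm: "set_borel_measurable lborel {0..1} h" and hb: "\<And>t. t \<in> {0..1} \<Longrightarrow> \<bar>h t\<bar> \<le> B"
    and \<delta>: "0 < \<delta>" "\<And>t. t < \<delta> \<Longrightarrow> h t = 0" and p: "0 < p"
  shows "Wc1p_with_deriv p (\<lambda>x. (LINT t:{0..x}|lborel. h t) - (LINT t:{0..1}|lborel. h t)) h"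
proof -
  let ?V = "\<lambda>x. (LINT t:{0..x}|lborel. h t) - (LINT t:{0..1}|lborel. h t)"
  have hi: "set_integrable lborel {0..1} h"
    by (rule set_integrable_bound[OF sint_const[of B] hm], rule AE_I2) (use hb in force)
  have "(\<lambda>x. indicator {0..1} x *\<^sub>R \<bar>h x\<bar> powr p) = (\<lambda>x. \<bar>indicator {0..1} x *\<^sub>R h x\<bar> powr p)"
    using p by (auto simp: indicator_def)
  moreover have "(\<lambda>x. \<bar>indicator {0..1} x *\<^sub>R h x\<bar> powr p) \<in> borel_measurable lborel"
    using hm unfolding set_borel_measurable_def by measurable
  ultimately have hpm: "set_borel_measurable lborel {0..1} (\<lambda>x. \<bar>h x\<bar> powr p)"
    unfolding set_borel_measurable_def by simp
  have hp: "set_integrable lborel {0..1} (\<lambda>x. \<bar>h x\<bar> powr p)"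
  proof (rule set_integrable_bound[OF sint_const[of "\<bar>B\<bar> powr p"] hpm], rule AE_I2, rule impI)
    fix x :: real assume "x \<in> {0..1}"
    then have "\<bar>h x\<bar> \<le> \<bar>B\<bar>" using hb by force
    then show "norm (\<bar>h x\<bar> powr p) \<le> norm (\<bar>B\<bar> powr p)" using p by (simp add: powr_mono2)
  qed
  have z: "(LINT t:{0..x}|lborel. h t) = 0" if "x < \<delta>" for x
  proof -
    have "(\<lambda>t. indicator {0..x} t *\<^sub>R h t) = (\<lambda>t. 0)"
      using that \<delta>(2) by (auto simp: indicator_def)
    then show ?thesis unfolding set_lebesgue_integral_def by simp
  qed
  have id: "\<forall>x\<in>{0..1}. ?V x = ?V 0 + (LINT t:{0..x}|lborel. h t)"
    using z[of 0] \<delta> by simp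
  have "((\<lambda>x. ?V 0) has_real_derivative 0) (at 0 within {0..1})" by simp
  then have d: "(?V has_real_derivative 0) (at 0 within {0..1})"
    by (rule has_field_derivative_transform_within[OF _ \<delta>(1)]) (use z z[of 0] \<delta>(1) in \<open>auto simp: dist_real_def\<close>)
  show ?thesis
    unfolding Wc1p_with_deriv_def W1p_with_deriv_def
    using hi hp id d by simp
qed



lemma adm_vbound:
  assumes W: "Wc1p_with_deriv p v g" and N: "NN p g = 1" and p: "1 \<le> p" and x: "x \<in> {0..1}"
  shows "\<bar>v x\<bar> \<le> 1"
  using wc_abs[OF W x] L1_bound[OF W p] N by simp

lemma adm_DD_le:
  assumes W: "Wc1p_with_deriv p v g" and N: "NN p g = 1" and p: "2 \<le> p"
  shows "DD p v \<le> 1"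
proof -
  have "DD p v \<le> (LINT r:{0..1::real}|lborel. (1::real))"
    unfolding DD_def
  proof (rule set_integral_mono)
    show "set_integrable lborel {0..1} (\<lambda>r. r powr (p - 2) * \<bar>v r\<bar> powr p)"
      using wc_den_int[OF W] p by simp
    show "set_integrable lborel {0..1::real} (\<lambda>r. 1::real)" using sint_const[of 1] by simp
    fix r :: real assume r: "r \<in> {0..1}"
    have "r powr (p - 2) \<le> 1" using r p by (auto intro: powr_le1)
    moreover have "\<bar>v r\<bar> powr p \<le> 1" using adm_vbound[OF W N _ r] p by (auto intro: powr_le1)
    ultimately show "r powr (p - 2) * \<bar>v r\<bar> powr p \<le> 1"
      by (metis mult_le_one powr_ge_zero)
  qed
  then show ?thesis by (simp add: sint_const_val)
qed

lemma adm_DD_pos: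
  assumes A: "Adm p v g" and p: "2 \<le> p"
  shows "0 < DD p v"
proof -
  from A obtain x0 where W: "Wc1p_with_deriv p v g" and x0: "x0 \<in> {0..1}" "v x0 \<noteq> 0"
    unfolding Adm_def by blast
  show ?thesis unfolding DD_def using den_pos[OF W x0, of "p-2" p] p by simp
qed

definition h0 :: "real \<Rightarrow> real" where "h0 t = (if 1/2 \<le> t then -1 else 0)"

lemma ex_adm: assumes "0 < p" shows "\<exists>v g. Adm p v g"
proof -
  have m: "set_borel_measurable lborel {0..1} h0"
  proof -
    have "h0 = (\<lambda>t. - indicator {1/2..} t)" by (auto simp: h0_def indicator_def fun_eq_iff)
    moreover have "(\<lambda>t::real. - indicator {1/2..} t :: real) \<in> borel_measurable borel" by measurable
    ultimately have "h0 \<in> borel_measurable borel" by simp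
    then show ?thesis by (rule setmeas) auto
  qed
  have W: "Wc1p_with_deriv p (\<lambda>x. (LINT t:{0..x}|lborel. h0 t) - (LINT t:{0..1}|lborel. h0 t)) h0"
    by (rule mk_wc[OF m _ _ _ assms, of 1 "1/2"]) (auto simp: h0_def)
  have "(LINT t:{0..1}|lborel. h0 t) = (LINT t:{0..1}|lborel. (-1) * indicator {1/2..1::real} t)"
    by (rule set_lebesgue_integral_cong) (auto simp: h0_def indicator_def)
  also have "\<dots> = -1/2" by (subst int_ind_const(2)) auto
  finally have I: "(LINT t:{0..1}|lborel. h0 t) = -1/2" .
  have "(LINT t:{0..0}|lborel. h0 t) = 0"
  proof -
    have "(\<lambda>t. indicator {0..0} t *\<^sub>R h0 t) = (\<lambda>t. 0)" by (auto simp: indicator_def h0_def)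
    then show ?thesis unfolding set_lebesgue_integral_def by simp
  qed
  then have "(LINT t:{0..0}|lborel. h0 t) - (LINT t:{0..1}|lborel. h0 t) \<noteq> 0" using I by simp
  then show ?thesis using W unfolding Adm_def by force
qed

lemma quot_lower:
  assumes A: "Adm p v g" and p: "2 \<le> p"
  shows "1/(p-1) \<le> NN p g / ((p - 1) * DD p v)"
proof -
  obtain v' g' where A': "Adm p v' g'" "NN p g' = 1"
    "NN p g' / ((p - 1) * DD p v') = NN p g / ((p - 1) * DD p v)"
    using normalize[OF A] p by auto
  have W': "Wc1p_with_deriv p v' g'" using A' unfolding Adm_def by blast
  have "0 < DD p v'" "DD p v' \<le> 1" using adm_DD_pos[OF A'(1) p] adm_DD_le[OF W' A'(2) p] by auto
  then have "1/(p-1) \<le> 1 / ((p - 1) * DD p v')" using p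
    by (intro divide_left_mono mult_pos_pos) (auto intro: mult_left_le)
  then show ?thesis using A' by simp
qed

lemma Sset_ne: "0 < p \<Longrightarrow> {NN p g / ((p - 1) * DD p v) | v g. Adm p v g} \<noteq> {}"
  using ex_adm by blast

lemma Sset_bdd: "2 \<le> p \<Longrightarrow> bdd_below {NN p g / ((p - 1) * DD p v) | v g. Adm p v g}"
  unfolding bdd_below_def using quot_lower by blast

lemma eta_le:
  assumes "Adm p v g" "2 \<le> p"
  shows "eta1 p \<le> NN p g / ((p - 1) * DD p v)"
  unfolding eta1_alt using assms Sset_bdd[OF assms(2)] by (intro cInf_lower) auto

lemma eta_lower:
  assumes "2 \<le> p"
  shows "1/(p-1) \<le> eta1 p"
  unfolding eta1_alt using assms Sset_ne[of p] quot_lower by (intro cInf_greatest) auto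

lemma eta_approx:
  assumes p: "2 \<le> p" and e: "0 < e"
  obtains v g where "Adm p v g" "NN p g = 1" "NN p g / ((p - 1) * DD p v) < eta1 p + e"
proof -
  have "eta1 p < eta1 p + e" using e by simp
  moreover have ne: "{NN p g / ((p - 1) * DD p v) | v g. Adm p v g} \<noteq> {}" using Sset_ne p by simp
  ultimately obtain x where "x \<in> {NN p g / ((p - 1) * DD p v) | v g. Adm p v g}" "x < eta1 p + e"
    using cInf_lessD[OF ne] unfolding eta1_alt by blast
  then obtain v g where A: "Adm p v g" "NN p g / ((p - 1) * DD p v) < eta1 p + e" by blast
  obtain v' g' where A': "Adm p v' g'" "NN p g' = 1"
    "NN p g' / ((p - 1) * DD p v') = NN p g / ((p - 1) * DD p v)"
    using normalize[OF A(1)] p by auto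
  show ?thesis using that[OF A'(1,2)] A' A by simp
qed



lemma sbm_abs_powr:
  fixes g :: "real \<Rightarrow> real"
  assumes "set_integrable lborel A g" "0 < p"
  shows "set_borel_measurable lborel A (\<lambda>x. \<bar>g x\<bar> powr p)"
proof -
  have hm: "(\<lambda>x. indicator A x *\<^sub>R g x) \<in> borel_measurable lborel"
    using assms(1) unfolding set_integrable_def by (rule borel_measurable_integrable)
  have "(\<lambda>x. indicator A x *\<^sub>R \<bar>g x\<bar> powr p) = (\<lambda>x. \<bar>indicator A x *\<^sub>R g x\<bar> powr p)"
    using assms(2) by (auto simp: indicator_def)
  moreover have "(\<lambda>x. \<bar>indicator A x *\<^sub>R g x\<bar> powr p) \<in> borel_measurable lborel"
    using hm by measurable
  ultimately show ?thesis unfolding set_borel_measurable_def by simp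
qed

lemma pw_mono:
  fixes r y p q :: real
  assumes r: "0 \<le> r" "r \<le> 1" and y: "\<bar>y\<bar> \<le> 1" and p: "2 \<le> p" "p \<le> q"
  shows "r powr (q-2) * \<bar>y\<bar> powr q \<le> r powr (p-2) * \<bar>y\<bar> powr p"
proof (cases "r = 0 \<or> y = 0")
  case True then show ?thesis using p by auto
next
  case False
  then have r0: "0 < r" and y0: "0 < \<bar>y\<bar>" using r by auto
  have e1: "r powr (q-2) = r powr (p-2) * r powr (q-p)" using r0 by (simp add: powr_add[symmetric])
  have e2: "\<bar>y\<bar> powr q = \<bar>y\<bar> powr p * \<bar>y\<bar> powr (q-p)" using y0 by (simp add: powr_add[symmetric])
  have a: "r powr (q-p) \<le> 1" using r p by (auto intro: powr_le1)
  have b: "\<bar>y\<bar> powr (q-p) \<le> 1" using y p by (auto intro: powr_le1)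
  have "r powr (q-2) * \<bar>y\<bar> powr q = (r powr (p-2) * \<bar>y\<bar> powr p) * (r powr (q-p) * \<bar>y\<bar> powr (q-p))"
    unfolding e1 e2 by (simp add: algebra_simps)
  also have "\<dots> \<le> (r powr (p-2) * \<bar>y\<bar> powr p) * 1"
    using a b by (intro mult_left_mono) (auto intro: mult_le_one)
  finally show ?thesis by simp
qed

lemma adm_lower_exp:
  assumes W: "Wc1p_with_deriv q v g" and p: "0 < p" "p \<le> q"
  shows "Wc1p_with_deriv p v g"
    and "NN p g \<le> (p/q) * NN q g + (1 - p/q)"
proof -
  have g: "set_integrable lborel {0..1} g" using wc_int[OF W] .
  have gq: "set_integrable lborel {0..1} (\<lambda>x. \<bar>g x\<bar> powr q)" using wc_gp[OF W] .
  have b: "set_integrable lborel {0..1} (\<lambda>x. (p/q) * \<bar>g x\<bar> powr q + (1 - p/q))"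
    using gq sint_const by (intro set_integral_add) auto
  have gp: "set_integrable lborel {0..1} (\<lambda>x. \<bar>g x\<bar> powr p)"
  proof (rule set_integrable_bound[OF b sbm_abs_powr[OF g p(1)]], rule AE_I2, rule impI)
    fix x :: real assume "x \<in> {0..1}"
    have "\<bar>g x\<bar> powr p \<le> (p/q) * \<bar>g x\<bar> powr q + (1 - p/q)" using young_pq p by blast
    moreover have "0 \<le> (p/q) * \<bar>g x\<bar> powr q + (1 - p/q)" using p by simp
    ultimately show "norm (\<bar>g x\<bar> powr p) \<le> norm ((p/q) * \<bar>g x\<bar> powr q + (1 - p/q))" by simp
  qed
  show "Wc1p_with_deriv p v g"
    using W gp unfolding Wc1p_with_deriv_def W1p_with_deriv_def by blast
  have "NN p g \<le> (LINT x:{0..1}|lborel. (p/q) * \<bar>g x\<bar> powr q + (1 - p/q))"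
    unfolding NN_def using gp b young_pq p by (intro set_integral_mono) auto
  also have "\<dots> = (p/q) * NN q g + (1 - p/q)"
    using gq sint_const by (simp add: NN_def sint_const_val)
  finally show "NN p g \<le> (p/q) * NN q g + (1 - p/q)" .
qed

lemma DD_mono:
  assumes W: "Wc1p_with_deriv q v g" and N: "NN q g = 1" and p: "2 \<le> p" "p \<le> q"
  shows "DD q v \<le> DD p v"
  unfolding DD_def
proof (rule set_integral_mono)
  show "set_integrable lborel {0..1} (\<lambda>r. r powr (q - 2) * \<bar>v r\<bar> powr q)"
    using wc_den_int[OF W] p by simp
  show "set_integrable lborel {0..1} (\<lambda>r. r powr (p - 2) * \<bar>v r\<bar> powr p)"
    using wc_den_int[OF W] p by simp
  fix r :: real assume r: "r \<in> {0..1}"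
  show "r powr (q - 2) * \<bar>v r\<bar> powr q \<le> r powr (p - 2) * \<bar>v r\<bar> powr p"
    using pw_mono[OF _ _ adm_vbound[OF W N _ r] p] r p by auto
qed

definition H :: "real \<Rightarrow> real" where "H p = (p - 1) * eta1 p"

lemma H_mono:
  assumes p: "2 \<le> p" "p \<le> q"
  shows "H p \<le> H q"
proof (rule field_le_epsilon)
  fix e0 :: real assume e0: "0 < e0"
  define e where "e = e0 / (q - 1)"
  have e: "0 < e" using e0 p by (simp add: e_def)
  have qe: "(q - 1) * e = e0" using p by (simp add: e_def)
  obtain v g where A: "Adm q v g" "NN q g = 1" "NN q g / ((q - 1) * DD q v) < eta1 q + e"
    using eta_approx[of q e] p e by auto
  have W: "Wc1p_with_deriv q v g" using A unfolding Adm_def by blast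
  have Ap: "Adm p v g" using A adm_lower_exp(1)[OF W] p unfolding Adm_def by auto
  have Np: "NN p g \<le> 1" using adm_lower_exp(2)[OF W, of p] p A(2) by simp
  have Dq: "0 < DD q v" using adm_DD_pos[OF A(1)] p by simp
  have Dqp: "DD q v \<le> DD p v" using DD_mono[OF W A(2) p] .
  have Np0: "0 \<le> NN p g" unfolding NN_def set_lebesgue_integral_def
    by (rule Bochner_Integration.integral_nonneg) (auto simp: indicator_def)
  have "H p \<le> (p - 1) * (NN p g / ((p - 1) * DD p v))"
    unfolding H_def using eta_le[OF Ap p(1)] p by (intro mult_left_mono) auto
  also have "\<dots> = NN p g / DD p v" using p by simp
  also have "\<dots> \<le> 1 / DD q v"
    using Np Np0 Dq Dqp by (intro frac_le) auto
  also have "\<dots> = (q - 1) * (NN q g / ((q - 1) * DD q v))" using p A(2) by simp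
  also have "\<dots> \<le> (q - 1) * (eta1 q + e)" using A(3) p by (intro mult_left_mono) auto
  also have "\<dots> = H q + (q - 1) * e" unfolding H_def by (simp add: algebra_simps)
  finally have "H p \<le> H q + (q - 1) * e" .
  then show "H p \<le> H q + e0" using qe by simp
qed



lemma powdiff:
  fixes a b q :: real
  assumes "0 \<le> b" "b \<le> a" "a \<le> 1" "1 \<le> q"
  shows "a powr q - b powr q \<le> q * (a - b)"
proof (cases "b = 0")
  case True
  have "a powr q \<le> a powr 1" using assms by (intro powr_mono') auto
  also have "\<dots> \<le> q * a" using assms by (cases "a = 0") (auto intro: mult_left_mono[of 1 q a, simplified])
  finally show ?thesis using True assms by simp
next
  case False
  then have b0: "0 < b" using assms by simp
  show ?thesis
  proof (cases "b = a")
    case True then show ?thesis by simp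
  next
    case False
    then have ba: "b < a" using assms by simp
    have der: "\<And>x. b \<le> x \<Longrightarrow> x \<le> a \<Longrightarrow> ((\<lambda>z. z powr q) has_real_derivative q * x powr (q - 1)) (at x)"
      using b0 by (intro has_real_derivative_powr) auto
    obtain z where z: "b < z" "z < a" "a powr q - b powr q = (a - b) * (q * z powr (q - 1))"
      using MVT2[OF ba der] by blast
    have "z powr (q - 1) \<le> 1" using z assms b0 by (intro powr_le1) auto
    then have "q * z powr (q - 1) \<le> q" using assms by (simp add: mult_left_le)
    then show ?thesis using z ba by (simp add: mult_left_mono mult.commute)
  qed
qed

lemma powdiff_abs:
  fixes x y q :: real
  assumes "\<bar>x\<bar> \<le> 1" "\<bar>y\<bar> \<le> 1" "1 \<le> q" "\<bar>x - y\<bar> \<le> e"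
  shows "\<bar>y\<bar> powr q \<ge> \<bar>x\<bar> powr q - q * e"
proof (cases "\<bar>y\<bar> \<le> \<bar>x\<bar>")
  case True
  have "\<bar>x\<bar> powr q - \<bar>y\<bar> powr q \<le> q * (\<bar>x\<bar> - \<bar>y\<bar>)" using powdiff True assms by simp
  also have "\<dots> \<le> q * e" using assms by (intro mult_left_mono) auto
  finally show ?thesis by simp
next
  case False
  then have "\<bar>x\<bar> powr q \<le> \<bar>y\<bar> powr q" using assms by (intro powr_mono2) auto
  moreover have "0 \<le> q * e" using assms by simp
  ultimately show ?thesis by simp
qed

lemma pw_clamp:
  fixes g M \<delta> t p :: real
  assumes M: "1 \<le> M" and p: "2 \<le> p"
  defines "gh \<equiv> (if \<delta> \<le> t then max (-M) (min M g) else 0)"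
  shows "\<bar>gh - g\<bar> \<le> M * indicator {..\<delta>} t + \<bar>g\<bar> powr p / M"
    and "\<bar>gh\<bar> \<le> M" and "\<bar>gh\<bar> \<le> \<bar>g\<bar>"
proof -
  have big: "\<bar>g\<bar> \<le> \<bar>g\<bar> powr p / M" if "M < \<bar>g\<bar>"
  proof -
    have g0: "0 < \<bar>g\<bar>" using that M by simp
    have "M powr 1 \<le> M powr (p - 1)" using M p by (intro powr_mono) auto
    then have "M \<le> M powr (p - 1)" using M by simp
    also have "\<dots> \<le> \<bar>g\<bar> powr (p - 1)" using that M p by (intro powr_mono2) auto
    finally have "M * \<bar>g\<bar> \<le> \<bar>g\<bar> powr (p - 1) * \<bar>g\<bar>" using g0 by simp
    also have "\<dots> = \<bar>g\<bar> powr (p - 1) * \<bar>g\<bar> powr 1" using g0 by simp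
    also have "\<dots> = \<bar>g\<bar> powr ((p - 1) + 1)" by (rule powr_add[symmetric])
    also have "\<dots> = \<bar>g\<bar> powr p" by simp
    finally show ?thesis using M by (simp add: field_simps)
  qed
  have nn: "0 \<le> \<bar>g\<bar> powr p / M" using M by simp
  show "\<bar>gh - g\<bar> \<le> M * indicator {..\<delta>} t + \<bar>g\<bar> powr p / M"
  proof (cases "\<delta> \<le> t")
    case True
    have "\<bar>gh - g\<bar> \<le> \<bar>g\<bar> powr p / M"
    proof (cases "\<bar>g\<bar> \<le> M")
      case True then show ?thesis using \<open>\<delta> \<le> t\<close> nn by (auto simp: gh_def)
    next
      case False then show ?thesis using big[of] \<open>\<delta> \<le> t\<close> M by (auto simp: gh_def)
    qed
    moreover have "0 \<le> M * indicator {..\<delta>} t" using M by simp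
    ultimately show ?thesis by simp
  next
    case False
    then have "gh = 0" "indicator {..\<delta>} t = (1::real)" by (auto simp: gh_def)
    moreover have "\<bar>g\<bar> \<le> M + \<bar>g\<bar> powr p / M"
    proof (cases "\<bar>g\<bar> \<le> M")
      case True then show ?thesis using nn by linarith
    next
      case False then show ?thesis using big[of] nn M by linarith
    qed
    ultimately show ?thesis by simp
  qed
  show "\<bar>gh\<bar> \<le> M" using M by (auto simp: gh_def)
  show "\<bar>gh\<bar> \<le> \<bar>g\<bar>" using M by (auto simp: gh_def abs_if)
qed

lemma pw_gq:
  fixes gh g M p q :: real
  assumes "\<bar>gh\<bar> \<le> M" "\<bar>gh\<bar> \<le> \<bar>g\<bar>" "0 < p" "p \<le> q"
  shows "\<bar>gh\<bar> powr q \<le> M powr (q - p) * \<bar>g\<bar> powr p"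
proof (cases "gh = 0")
  case True then show ?thesis by simp
next
  case False
  then have g0: "0 < \<bar>gh\<bar>" by simp
  have "\<bar>gh\<bar> powr q = \<bar>gh\<bar> powr (q - p) * \<bar>gh\<bar> powr p" using g0 by (simp add: powr_add[symmetric])
  also have "\<dots> \<le> M powr (q - p) * \<bar>g\<bar> powr p"
    using assms g0 by (intro mult_mono powr_mono2) auto
  finally show ?thesis .
qed

lemma pw_exp:
  fixes r y s p q :: real
  assumes r: "0 \<le> r" "r \<le> 1" and y: "\<bar>y\<bar> \<le> 1" and p: "2 \<le> p" "p \<le> q" and s: "0 < s" "s \<le> 1"
  shows "r powr (q-2) * \<bar>y\<bar> powr q \<ge> (s^2) powr (q - p) * (r powr (p-2) * \<bar>y\<bar> powr p - s^2 - indicator {..s} r)"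
proof (cases "s^2 \<le> r * \<bar>y\<bar>")
  case True
  have "0 < s^2" using s by simp
  then have "0 < r * \<bar>y\<bar>" using True by linarith
  then have r0: "0 < r" and y0: "0 < \<bar>y\<bar>" using r by (auto simp: zero_less_mult_iff)
  have e1: "r powr (q-2) * \<bar>y\<bar> powr q = (r powr (p-2) * \<bar>y\<bar> powr p) * (r * \<bar>y\<bar>) powr (q - p)"
  proof -
    have a1: "r powr (q-2) = r powr (p-2) * r powr (q-p)"
      using powr_add[of r "p-2" "q-p"] by simp
    have a2: "\<bar>y\<bar> powr q = \<bar>y\<bar> powr p * \<bar>y\<bar> powr (q-p)"
      using powr_add[of "\<bar>y\<bar>" p "q-p"] by simp
    have a3: "(r * \<bar>y\<bar>) powr (q - p) = r powr (q-p) * \<bar>y\<bar> powr (q-p)"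
      using r0 by (simp add: powr_mult)
    show ?thesis unfolding a1 a2 a3 by (simp add: algebra_simps)
  qed
  have sr: "(s^2) powr (q - p) \<le> (r * \<bar>y\<bar>) powr (q - p)" using True s p by (intro powr_mono2) auto
  have "(s^2) powr (q - p) * (r powr (p-2) * \<bar>y\<bar> powr p) \<le> r powr (q-2) * \<bar>y\<bar> powr q"
    using mult_right_mono[OF sr, of "r powr (p-2) * \<bar>y\<bar> powr p"] unfolding e1 by (simp add: mult.commute)
  moreover have "(s^2) powr (q - p) * (r powr (p-2) * \<bar>y\<bar> powr p - s^2 - indicator {..s} r)
      \<le> (s^2) powr (q - p) * (r powr (p-2) * \<bar>y\<bar> powr p)"
    proof (rule mult_left_mono)
    have "(0::real) \<le> indicator {..s} r" "0 \<le> s^2" by simp_all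
    then show "r powr (p-2) * \<bar>y\<bar> powr p - s^2 - indicator {..s} r \<le> r powr (p-2) * \<bar>y\<bar> powr p"
      by linarith
  qed simp
  ultimately show ?thesis by linarith
next
  case False
  have "r powr (p-2) * \<bar>y\<bar> powr p \<le> s^2 + indicator {..s} r"
  proof (cases "r \<le> s")
    case True
    have "r powr (p-2) \<le> 1" using r p by (auto intro: powr_le1)
    moreover have "\<bar>y\<bar> powr p \<le> 1" using y p by (auto intro: powr_le1)
    ultimately have "r powr (p-2) * \<bar>y\<bar> powr p \<le> 1" by (metis mult_le_one powr_ge_zero)
    moreover have "0 \<le> s^2" by simp
    moreover have "indicator {..s} r = (1::real)" using True by simp
    ultimately show ?thesis by linarith
  next
    case rs: False
    have "\<bar>y\<bar> < s"
    proof (rule ccontr)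
      assume "\<not> \<bar>y\<bar> < s"
      then have "s * s \<le> r * \<bar>y\<bar>" using rs s by (intro mult_mono) auto
      then show False using False by (simp add: power2_eq_square)
    qed
    have "r powr (p-2) \<le> 1" using r p by (auto intro: powr_le1)
    moreover have "\<bar>y\<bar> powr p \<le> \<bar>y\<bar> powr 2" by (rule powr_mono') (use y p in auto)
    moreover have "\<bar>y\<bar> powr 2 \<le> s^2" proof -
      have "\<bar>y\<bar> powr 2 = \<bar>y\<bar>^2" by (rule powr_numeral) simp
      moreover have "\<bar>y\<bar>^2 \<le> s^2" using \<open>\<bar>y\<bar> < s\<close> by (intro power_mono) auto
      ultimately show ?thesis by simp
    qed
    ultimately have "r powr (p-2) * \<bar>y\<bar> powr p \<le> s^2"
      using mult_left_le_one_le[of "\<bar>y\<bar> powr p" "r powr (p-2)"] by simp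
    moreover have "(0::real) \<le> indicator {..s} r" by simp
    ultimately show ?thesis by linarith
  qed
  then have "(s^2) powr (q - p) * (r powr (p-2) * \<bar>y\<bar> powr p - s^2 - indicator {..s} r) \<le> 0"
    by (intro mult_nonneg_nonpos) auto
  moreover have "0 \<le> r powr (q-2) * \<bar>y\<bar> powr q" by simp
  ultimately show ?thesis by linarith
qed



lemma NN_nonneg: "0 \<le> NN p g"
  unfolding NN_def set_lebesgue_integral_def
  by (rule Bochner_Integration.integral_nonneg) (auto simp: indicator_def)

lemma int_ind_le:
  fixes c s :: real
  assumes "0 \<le> s" "s \<le> 1"
  shows "set_integrable lborel {0..1} (\<lambda>r. c * indicator {..s} r)"
    and "(LINT r:{0..1}|lborel. c * indicator {..s} r) = c * s"
proof -
  have e: "\<And>r. r \<in> {0..1} \<Longrightarrow> c * indicator {..s} r = c * indicator {0..s} r"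
    by (auto simp: indicator_def)
  show "set_integrable lborel {0..1} (\<lambda>r. c * indicator {..s} r)"
  proof -
    have "set_integrable lborel {0..1} (\<lambda>r. c * indicator {..s} r) = set_integrable lborel {0..1} (\<lambda>r. c * indicator {0..s} r)"
      by (rule set_integrable_cong) (auto simp: indicator_def)
    then show ?thesis using int_ind_const(1)[of 0 s c] assms by simp
  qed
  show "(LINT r:{0..1}|lborel. c * indicator {..s} r) = c * s"
  proof -
    have "(LINT r:{0..1}|lborel. c * indicator {..s} r) = (LINT r:{0..1}|lborel. c * indicator {0..s} r)"
      by (rule set_lebesgue_integral_cong) (auto simp: indicator_def)
    then show ?thesis using int_ind_const(2)[of 0 s c] assms by (cases "c = 0") simp_all
  qed
qed

lemma trunc_bound:
  assumes A: "Adm p v g" and N: "NN p g = 1" and p: "2 \<le> p" "p \<le> q" and M: "1 \<le> M"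
    and s: "0 < s" "s \<le> 1"
    and B: "0 < (s^2) powr (q - p) * (DD p v - s^2 - s) - q * (2 / M)"
  shows "H q \<le> M powr (q - p) / ((s^2) powr (q - p) * (DD p v - s^2 - s) - q * (2 / M))"
proof -
  define B0 where "B0 = (s^2) powr (q - p) * (DD p v - s^2 - s) - q * (2 / M)"
  have W: "Wc1p_with_deriv p v g" using A unfolding Adm_def by blast
  have g: "set_integrable lborel {0..1} g" using wc_int[OF W] .
  have gp: "set_integrable lborel {0..1} (\<lambda>t. \<bar>g t\<bar> powr p)" using wc_gp[OF W] .
  define \<delta> where "\<delta> = 1 / M^2"
  have MM: "1 \<le> M * M" using M mult_mono[of 1 M 1 M] by simp
  have \<delta>: "0 < \<delta>" "\<delta> \<le> 1" "M * \<delta> = 1 / M" using M MM by (auto simp: \<delta>_def power2_eq_square)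
  define gh where "gh t = (if \<delta> \<le> t then max (-M) (min M (g t)) else 0)" for t
  define vh where "vh x = (LINT t:{0..x}|lborel. gh t) - (LINT t:{0..1}|lborel. gh t)" for x
  have c1: "\<bar>gh t - g t\<bar> \<le> M * indicator {..\<delta>} t + \<bar>g t\<bar> powr p / M"
    and c2: "\<bar>gh t\<bar> \<le> M" and c3: "\<bar>gh t\<bar> \<le> \<bar>g t\<bar>" for t
    unfolding gh_def using pw_clamp[OF M p(1), of \<delta> t "g t"] by auto
  have hm: "set_borel_measurable lborel {0..1} gh"
  proof -
    have gim: "(\<lambda>t. indicator {0..1} t *\<^sub>R g t) \<in> borel_measurable lborel"
      using g unfolding set_integrable_def by (rule borel_measurable_integrable)
    have "(\<lambda>t. indicator {0..1} t *\<^sub>R gh t) =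
          (\<lambda>t. indicator {0..1} t * (if \<delta> \<le> t then max (-M) (min M (indicator {0..1} t *\<^sub>R g t)) else 0))"
      by (auto simp: gh_def indicator_def fun_eq_iff)
    moreover have "(\<lambda>t. indicator {0..1} t * (if \<delta> \<le> t then max (-M) (min M (indicator {0..1} t *\<^sub>R g t)) else 0))
        \<in> borel_measurable lborel"
      using gim by measurable
    ultimately show ?thesis unfolding set_borel_measurable_def by simp
  qed
  have Wq: "Wc1p_with_deriv q vh gh"
    unfolding vh_def
    by (rule mk_wc[OF hm _ \<delta>(1), of M]) (use c2 p in \<open>auto simp: gh_def\<close>)
  have gh: "set_integrable lborel {0..1} gh" using wc_int[OF Wq] .
  have NNq: "NN q gh \<le> M powr (q - p)"
  proof -
    have "NN q gh \<le> (LINT t:{0..1}|lborel. M powr (q - p) * \<bar>g t\<bar> powr p)"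
      unfolding NN_def using wc_gp[OF Wq] gp pw_gq[OF c2 c3] p
      by (intro set_integral_mono) auto
    also have "\<dots> = M powr (q - p)" using N by (simp add: NN_def)
    finally show ?thesis .
  qed
  have L1d: "(LINT t:{0..1}|lborel. \<bar>gh t - g t\<bar>) \<le> 2 / M"
  proof -
    have i1: "set_integrable lborel {0..1} (\<lambda>t. M * indicator {..\<delta>} t)"
      using int_ind_le(1)[of \<delta> M] \<delta> by simp
    have i2: "set_integrable lborel {0..1} (\<lambda>t. \<bar>g t\<bar> powr p / M)" using gp by simp
    have "(LINT t:{0..1}|lborel. \<bar>gh t - g t\<bar>) \<le>
          (LINT t:{0..1}|lborel. M * indicator {..\<delta>} t + \<bar>g t\<bar> powr p / M)"
      using gh g i1 i2 c1 by (intro set_integral_mono set_integral_add set_integrable_abs set_integral_diff) auto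
    also have "\<dots> = M * \<delta> + NN p g / M"
      using i1 i2 int_ind_le(2)[of \<delta> M] \<delta> by (simp add: NN_def)
    also have "\<dots> = 2 / M" using \<delta> N by simp
    finally show ?thesis .
  qed
  have close: "\<bar>vh x - v x\<bar> \<le> 2 / M" if x: "x \<in> {0..1}" for x
  proof -
    have d: "set_integrable lborel {0..1} (\<lambda>t. gh t - g t)" using gh g by auto
    have gx: "set_integrable lborel {0..x} g" "set_integrable lborel {0..x} gh"
      using x by (auto intro: set_integrable_subset[OF g] set_integrable_subset[OF gh])
    have "vh x - v x = (LINT t:{0..x}|lborel. gh t - g t) - (LINT t:{0..1}|lborel. gh t - g t)"
      unfolding vh_def wc_v[OF W x] using gx gh g by (simp add: set_integral_diff)
    then have "\<bar>vh x - v x\<bar> \<le> (LINT t:{0..1}|lborel. \<bar>gh t - g t\<bar>)"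
      using int_sub_bound[OF d x] by simp
    then show ?thesis using L1d by simp
  qed
  have vb: "\<bar>v x\<bar> \<le> 1" if "x \<in> {0..1}" for x using adm_vbound[OF W N _ that] p by simp
  have vhb: "\<bar>vh x\<bar> \<le> 1" if x: "x \<in> {0..1}" for x
  proof -
    have "(LINT t:{0..1}|lborel. \<bar>gh t\<bar>) \<le> (LINT t:{0..1}|lborel. \<bar>g t\<bar>)"
      using gh g c3 by (intro set_integral_mono set_integrable_abs) auto
    also have "\<dots> \<le> 1" using L1_bound[OF W] N p by simp
    finally show ?thesis using wc_abs[OF Wq x] by simp
  qed
  have D1: "DD q v - q * (2 / M) \<le> DD q vh"
  proof -
    have iv: "set_integrable lborel {0..1} (\<lambda>r. r powr (q - 2) * \<bar>v r\<bar> powr q)"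
      using wc_den_int[OF W] p by simp
    have ivh: "set_integrable lborel {0..1} (\<lambda>r. r powr (q - 2) * \<bar>vh r\<bar> powr q)"
      using wc_den_int[OF Wq] p by simp
    have "(LINT r:{0..1}|lborel. r powr (q - 2) * \<bar>v r\<bar> powr q - q * (2 / M)) \<le> DD q vh"
      unfolding DD_def
    proof (rule set_integral_mono)
      show "set_integrable lborel {0..1} (\<lambda>r. r powr (q - 2) * \<bar>v r\<bar> powr q - q * (2 / M))"
        using iv sint_const by (intro set_integral_diff) auto
      show "set_integrable lborel {0..1} (\<lambda>r. r powr (q - 2) * \<bar>vh r\<bar> powr q)" by (rule ivh)
      fix r :: real assume r: "r \<in> {0..1}"
      have e: "\<bar>v r - vh r\<bar> \<le> 2 / M" using close[OF r] by simp
      have a: "\<bar>vh r\<bar> powr q \<ge> \<bar>v r\<bar> powr q - q * (2 / M)"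
        using powdiff_abs[OF vb[OF r] vhb[OF r] _ e] p by simp
      have r1: "r powr (q - 2) \<le> 1" "0 \<le> r powr (q - 2)" using r p by (auto intro: powr_le1)
      have qe: "0 \<le> q * (2 / M)" using p M by simp
      have "r powr (q - 2) * (\<bar>v r\<bar> powr q - q * (2 / M)) \<le> r powr (q - 2) * \<bar>vh r\<bar> powr q"
        using a r1 by (intro mult_left_mono) auto
      moreover have "r powr (q - 2) * \<bar>v r\<bar> powr q - q * (2 / M) \<le> r powr (q - 2) * (\<bar>v r\<bar> powr q - q * (2 / M))"
      proof -
        have "r powr (q - 2) * (q * (2 / M)) \<le> q * (2 / M)"
          using r1 qe by (intro mult_left_le_one_le) auto
        then show ?thesis by (simp add: right_diff_distrib)
      qed
      ultimately show "r powr (q - 2) * \<bar>v r\<bar> powr q - q * (2 / M) \<le> r powr (q - 2) * \<bar>vh r\<bar> powr q"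
        by linarith
    qed
    moreover have "(LINT r:{0..1}|lborel. r powr (q - 2) * \<bar>v r\<bar> powr q - q * (2 / M)) = DD q v - q * (2 / M)"
      using iv sint_const by (simp add: DD_def set_integral_diff sint_const_val)
    ultimately show ?thesis by simp
  qed
  have D2: "(s^2) powr (q - p) * (DD p v - s^2 - s) \<le> DD q v"
  proof -
    have ip: "set_integrable lborel {0..1} (\<lambda>r. r powr (p - 2) * \<bar>v r\<bar> powr p)"
      using wc_den_int[OF W] p by simp
    have iv: "set_integrable lborel {0..1} (\<lambda>r. r powr (q - 2) * \<bar>v r\<bar> powr q)"
      using wc_den_int[OF W] p by simp
    have ii: "set_integrable lborel {0..1} (\<lambda>r. (1::real) * indicator {..s} r)" using int_ind_le(1)[of s 1] s by simp
    have if1: "set_integrable lborel {0..1} (\<lambda>r. r powr (p - 2) * \<bar>v r\<bar> powr p - s^2 - (1::real) * indicator {..s} r)"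
      using ip ii sint_const by (intro set_integral_diff) auto
    have "(LINT r:{0..1}|lborel. (s^2) powr (q - p) * (r powr (p - 2) * \<bar>v r\<bar> powr p - s^2 - (1::real) * indicator {..s} r))
          \<le> DD q v"
      unfolding DD_def
      using if1 iv pw_exp[OF _ _ vb p s] by (intro set_integral_mono) auto
    moreover have "(LINT r:{0..1}|lborel. (s^2) powr (q - p) * (r powr (p - 2) * \<bar>v r\<bar> powr p - s^2 - (1::real) * indicator {..s} r))
        = (s^2) powr (q - p) * (DD p v - s^2 - s)"
    proof -
      have "(LINT r:{0..1}|lborel. r powr (p - 2) * \<bar>v r\<bar> powr p - s^2 - (1::real) * indicator {..s} r)
            = (LINT r:{0..1}|lborel. r powr (p - 2) * \<bar>v r\<bar> powr p - s^2) - (LINT r:{0..1}|lborel. (1::real) * indicator {..s} r)"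
        using ip ii sint_const by (intro set_integral_diff) auto
      also have "(LINT r:{0..1}|lborel. r powr (p - 2) * \<bar>v r\<bar> powr p - s^2) = DD p v - s^2"
        using ip sint_const by (simp add: DD_def set_integral_diff sint_const_val)
      also have "(LINT r:{0..1}|lborel. (1::real) * indicator {..s} r) = s" using int_ind_le(2)[of s 1] s by simp
      finally show ?thesis by simp
    qed
    ultimately show ?thesis using s by simp
  qed
  have DB: "B0 \<le> DD q vh" using D1 D2 unfolding B0_def by simp
  have B0: "0 < B0" using B unfolding B0_def .
  have Aq: "Adm q vh gh"
  proof -
    have "\<exists>x\<in>{0..1}. vh x \<noteq> 0"
    proof (rule ccontr)
      assume "\<not> ?thesis"
      then have "DD q vh = (LINT r:{0..1::real}|lborel. (0::real))"
        unfolding DD_def using p by (intro set_lebesgue_integral_cong) auto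
      then show False using DB B0 by simp
    qed
    then show ?thesis using Wq unfolding Adm_def by blast
  qed
  have "H q \<le> (q - 1) * (NN q gh / ((q - 1) * DD q vh))"
    unfolding H_def using eta_le[OF Aq] p by (intro mult_left_mono) auto
  also have "\<dots> = NN q gh / DD q vh" using p by simp
  also have "\<dots> \<le> M powr (q - p) / B0"
    using NNq NN_nonneg DB B0 by (intro frac_le) auto
  finally show ?thesis unfolding B0_def .
qed



lemma H_ge1: "2 \<le> p \<Longrightarrow> 1 \<le> H p"
  using eta_lower[of p] unfolding H_def by (simp add: field_simps)

lemma approx_H:
  assumes p: "2 \<le> p" and e: "0 < e"
  obtains v g where "Adm p v g" "NN p g = 1" "0 < DD p v" "1 / DD p v < H p + e"
proof -
  obtain v g where A: "Adm p v g" "NN p g = 1" "NN p g / ((p - 1) * DD p v) < eta1 p + e / (p - 1)"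
    using eta_approx[of p "e / (p - 1)"] p e by auto
  have D: "0 < DD p v" using adm_DD_pos[OF A(1) p] .
  have "(p - 1) * (1 / ((p - 1) * DD p v)) < (p - 1) * (eta1 p + e / (p - 1))"
    using A(2,3) p by (intro mult_strict_left_mono) auto
  moreover have "(p - 1) * (1 / ((p - 1) * DD p v)) = 1 / DD p v" using p by simp
  moreover have "(p - 1) * (eta1 p + e / (p - 1)) = H p + e" using p unfolding H_def by (simp add: distrib_left)
  ultimately have "1 / DD p v < H p + e" by simp
  then show ?thesis using that A(1,2) D by blast
qed

lemma frac_bound:
  fixes \<tau> :: real
  assumes "0 \<le> \<tau>" "\<tau> \<le> 1/4"
  shows "(1 + \<tau>) / (1 - 2 * \<tau>) \<le> 1 + 6 * \<tau>"
proof -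
  have "1 + \<tau> \<le> (1 + 6 * \<tau>) * (1 - 2 * \<tau>)"
  proof -
    have "12 * \<tau> * \<tau> \<le> 3 * \<tau>" using assms mult_left_mono[of \<tau> "1/4" "12*\<tau>"] by simp
    then show ?thesis by (simp add: algebra_simps)
  qed
  moreover have "0 < 1 - 2 * \<tau>" using assms by simp
  ultimately show ?thesis by (simp add: divide_le_eq)
qed

lemma uniform:
  assumes P: "2 \<le> P" and e: "0 < e"
  obtains d where "0 < d" "\<And>p q. 2 \<le> p \<Longrightarrow> p \<le> q \<Longrightarrow> q \<le> P \<Longrightarrow> q - p \<le> d \<Longrightarrow> H q \<le> H p + e"
proof -
  define K where "K = H P"
  have K: "1 \<le> K" using H_ge1[OF P] by (simp add: K_def)
  define D0 where "D0 = 1 / (K + 1)"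
  have D0: "0 < D0" "D0 \<le> 1" using K by (auto simp: D0_def)
  define \<tau> where "\<tau> = min (1/4) (e / (12 * (K + 1)))"
  have \<tau>: "0 < \<tau>" "\<tau> \<le> 1/4" "6 * \<tau> * (K + 1) \<le> e / 2"
  proof -
    show "0 < \<tau>" using e K by (auto simp: \<tau>_def)
    show "\<tau> \<le> 1/4" unfolding \<tau>_def by (rule min.cobounded1)
    have "\<tau> \<le> e / (12 * (K + 1))" by (simp add: \<tau>_def)
    then have "6 * \<tau> * (K + 1) \<le> 6 * (e / (12 * (K + 1))) * (K + 1)"
      using K by (intro mult_right_mono mult_left_mono) auto
    also have "\<dots> = e / 2" using K by (simp add: field_simps)
    finally show "6 * \<tau> * (K + 1) \<le> e / 2" .
  qed
  define s where "s = \<tau> * D0 / 4"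
  have s: "0 < s" "s \<le> 1" "s^2 \<le> s" "s^2 + s \<le> \<tau> * D0 / 2"
  proof -
    show s0: "0 < s" using \<tau> D0 by (simp add: s_def)
    have "\<tau> * D0 \<le> 1/4 * 1" using \<tau> D0 by (intro mult_mono) auto
    then show s1: "s \<le> 1" by (simp add: s_def)
    show "s^2 \<le> s" using s0 s1 by (simp add: power2_eq_square mult_left_le)
    moreover have "2 * s = \<tau> * D0 / 2" by (simp add: s_def)
    ultimately show "s^2 + s \<le> \<tau> * D0 / 2" by linarith
  qed
  define t where "t = s^2"
  have t: "0 < t" "t < 1"
  proof -
    show "0 < t" using s by (simp add: t_def)
    have "s \<le> 1/16"
    proof -
      have "\<tau> * D0 \<le> 1/4 * 1" using \<tau> D0 by (intro mult_mono) auto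
      then show ?thesis by (simp add: s_def mult.commute)
    qed
    then have "s * s \<le> 1/16 * 1" using s by (intro mult_mono) auto
    then show "t < 1" by (simp add: t_def power2_eq_square)
  qed
  define M where "M = max 2 (4 * P / (\<tau> * D0))"
  have M: "2 \<le> M" "1 \<le> M" "2 * P / M \<le> \<tau> * D0 / 2"
  proof -
    show "2 \<le> M" "1 \<le> M" by (auto simp: M_def)
    have "4 * P / (\<tau> * D0) \<le> M" by (simp add: M_def)
    then have "4 * P \<le> M * (\<tau> * D0)" using \<tau> D0 by (simp add: divide_le_eq)
    then show "2 * P / M \<le> \<tau> * D0 / 2" using \<open>2 \<le> M\<close> by (simp add: field_simps)
  qed
  have lM: "0 < ln M" using M by simp
  have lt: "ln t < 0" using t by simp
  define d where "d = min (ln (1 + \<tau>) / ln M) (\<tau> / (- ln t))"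
  have d: "0 < d" using \<tau> lM lt by (simp add: d_def divide_pos_neg)
  show ?thesis
  proof (rule that[OF d])
    fix p q :: real
    assume pq: "2 \<le> p" "p \<le> q" "q \<le> P" "q - p \<le> d"
    define x where "x = q - p"
    have x: "0 \<le> x" "x \<le> d" using pq by (auto simp: x_def)
    obtain v g where A: "Adm p v g" "NN p g = 1" "0 < DD p v" "1 / DD p v < H p + min (e/2) 1"
      using approx_H[OF pq(1), of "min (e/2) 1"] e by auto
    define D where "D = DD p v"
    have HpK: "H p \<le> K" unfolding K_def using H_mono pq by simp
    have D: "0 < D" "D0 \<le> D"
    proof -
      show D: "0 < D" using A by (simp add: D_def)
      have "1 / D < K + 1" using A(4) HpK unfolding D_def by linarith
      then show "D0 \<le> D" using D K unfolding D0_def by (simp add: field_simps)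
    qed
    have Mx: "M powr x \<le> 1 + \<tau>"
    proof -
      have "M powr x \<le> M powr (ln (1 + \<tau>) / ln M)"
        using x M by (intro powr_mono) (auto simp: d_def)
      also have "\<dots> = 1 + \<tau>" using lM \<tau> M by (simp add: powr_def)
      finally show ?thesis .
    qed
    have tx: "1 - \<tau> \<le> t powr x"
    proof -
      have "x * (- ln t) \<le> \<tau>"
      proof -
        have "x \<le> \<tau> / (- ln t)" using x by (simp add: d_def)
        then have "x * (- ln t) \<le> \<tau> / (- ln t) * (- ln t)" using lt by (intro mult_right_mono) auto
        also have "\<dots> = \<tau>" using lt by simp
        finally show ?thesis .
      qed
      then have "1 - \<tau> \<le> 1 + x * ln t" by simp
      also have "\<dots> \<le> exp (x * ln t)" by (rule exp_ge_add_one_self)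
      also have "\<dots> = t powr x" using t by (simp add: powr_def mult.commute)
      finally show ?thesis .
    qed
    define B where "B = (s^2) powr (q - p) * (D - s^2 - s) - q * (2 / M)"
    have qM: "q * (2 / M) \<le> \<tau> * D0 / 2"
    proof -
      have "q * (2 / M) \<le> P * (2 / M)" using pq M by (intro mult_right_mono) auto
      then show ?thesis using M by simp
    qed
    have B: "(1 - 2 * \<tau>) * D \<le> B"
    proof -
      have "\<tau> * D0 \<le> D0" using \<tau> D0 by (intro mult_left_le_one_le) auto
      then have a0: "0 \<le> D - s^2 - s" using s(4) D by linarith
      define Y where "Y = D - s^2 - s"
      define T where "T = t powr x"
      have f1: "(1 - \<tau>) * Y \<le> T * Y"
        using tx a0 unfolding Y_def T_def by (intro mult_right_mono) auto
      have f2: "D - \<tau> * D - (s^2 + s) \<le> (1 - \<tau>) * Y"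
      proof -
        have "(1 - \<tau>) * (s^2 + s) \<le> 1 * (s^2 + s)" using \<tau> s by (intro mult_right_mono) auto
        then show ?thesis unfolding Y_def by (simp add: algebra_simps)
      qed
      have f3: "\<tau> * D0 \<le> \<tau> * D" using D \<tau> by (intro mult_left_mono) auto
      have eB: "B = T * Y - q * (2 / M)" unfolding B_def T_def Y_def t_def x_def ..
      have eL: "(1 - 2 * \<tau>) * D = D - 2 * (\<tau> * D)" by (simp add: algebra_simps)
      show ?thesis unfolding eB eL using f1 f2 f3 s(4) qM by linarith
    qed
    have B0: "0 < (1 - 2 * \<tau>) * D" using \<tau> D by simp
    have Bpos: "0 < B" using B B0 by linarith
    have Hq: "H q \<le> M powr (q - p) / B"
      using trunc_bound[OF A(1,2) pq(1,2) M(2) s(1,2)] Bpos unfolding B_def D_def by simp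
    also have "\<dots> \<le> (1 + \<tau>) / ((1 - 2 * \<tau>) * D)"
      using Mx B B0 \<tau> unfolding x_def by (intro frac_le) auto
    also have "\<dots> = ((1 + \<tau>) / (1 - 2 * \<tau>)) * (1 / D)" by simp
    also have "\<dots> \<le> (1 + 6 * \<tau>) * (1 / D)"
      using frac_bound[of \<tau>] \<tau> D by (intro mult_right_mono) auto
    also have "\<dots> = 1 / D + 6 * \<tau> * (1 / D)" by (simp add: algebra_simps)
    also have "\<dots> \<le> 1 / D + 6 * \<tau> * (K + 1)"
    proof -
      have "1 / D \<le> K + 1" using A(4) HpK unfolding D_def by linarith
      then have "6 * \<tau> * (1 / D) \<le> 6 * \<tau> * (K + 1)" using \<tau> by (intro mult_left_mono) auto
      then show ?thesis by linarith
    qed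
    also have "\<dots> \<le> H p + e"
      using A(4) \<tau>(3) unfolding D_def by linarith
    finally show "H q \<le> H p + e" .
  qed
qed

lemma H_cont: "continuous_on {2..} H"
  unfolding continuous_on_iff
proof (intro ballI allI impI)
  fix x0 e :: real assume x0: "x0 \<in> {2..}" and e: "0 < e"
  obtain d where d: "0 < d" "\<And>p q. 2 \<le> p \<Longrightarrow> p \<le> q \<Longrightarrow> q \<le> x0 + 1 \<Longrightarrow> q - p \<le> d \<Longrightarrow> H q \<le> H p + e/2"
    using uniform[of "x0 + 1" "e/2"] x0 e by auto
  show "\<exists>d>0. \<forall>x'\<in>{2..}. dist x' x0 < d \<longrightarrow> dist (H x') (H x0) < e"
  proof (intro exI[of _ "min d 1"] conjI ballI impI)
    show "0 < min d 1" using d by simp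
    fix y assume y: "y \<in> {2..}" "dist y x0 < min d 1"
    show "dist (H y) (H x0) < e"
    proof (cases "x0 \<le> y")
      case True
      have "H x0 \<le> H y" using H_mono True x0 by auto
      moreover have "H y \<le> H x0 + e/2" using d(2)[of x0 y] True x0 y by (auto simp: dist_real_def)
      ultimately show ?thesis using e by (simp add: dist_real_def)
    next
      case False
      have "H y \<le> H x0" using H_mono False y by auto
      moreover have "H x0 \<le> H y + e/2" using d(2)[of y x0] False x0 y by (auto simp: dist_real_def)
      ultimately show ?thesis using e by (simp add: dist_real_def)
    qed
  qed
qed

theorem lemma2p7:
  shows "continuous_on {2..} mu1"
proof -
  have ce: "continuous_on {2..} (\<lambda>p. H p / (p - 1))"
    by (intro continuous_intros H_cont) auto
  have eta: "continuous_on {2..} eta1"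
    by (rule continuous_on_eq[OF ce]) (auto simp: H_def)
  have "continuous_on {2..} (\<lambda>p. eta1 p powr (1 / (p - 1)))"
  proof (intro continuous_intros eta ballI)
    fix p :: real assume "p \<in> {2..}"
    then have "0 < 1/(p-1)" "1/(p-1) \<le> eta1 p" using eta_lower[of p] by auto
    then show "eta1 p \<noteq> 0" by linarith
  qed auto
  then show ?thesis unfolding mu1_def[abs_def] .
qed

end
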